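(* Let $t\in(0,1)$ and $\gamma>0$, and let $v_\gamma(z)=(1-|z|)^\gamma$ for $z\in\mathbb{D}$. (i) If $\gamma\ge1$, then $\|C_t\|_{H^\infty_{v_\gamma}\to H^\infty_{v_\gamma}}=1$. (ii) If $\gamma\in(0,1)$, then $\|C_t\|_{H^\infty_{v_\gamma}\to H^\infty_{v_\gamma}}\le\min\{-\frac{\log(1-t)}{t},\frac{1}{\gamma}\}$.
   Context: $\mathbb{D}=\{z\in\mathbb{C}:|z|<1\}$ and $H(\mathbb{D})$ is the space of holomorphic functions on $\mathbb{D}$. For a weight $v$ (continuous non-increasing $v\colon[0,1)\to(0,\infty)$, with $v(z):=v(|z|)$), $H^\infty_v=\{f\in H(\mathbb{D}):\|f\|_{\infty,v}:=\sup_{z\in\mathbb{D}}|f(z)|v(z)<\infty\}$ with norm $\|\cdot\|_{\infty,v}$. For $t\in[0,1]$ the generalized Cesàro operator $C_t$ is defined on $f\in H(\mathbb{D})$ by $C_tf(0)=f(0)$ and $C_tf(z)=\frac{1}{z}\int_0^z\frac{f(\xi)}{1-t\xi}\,d\xi$ for $z\in\mathbb{D}\setminus\{0\}$. *)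

theory Defs
  imports "HOL-Complex_Analysis.Complex_Analysis"
begin

text \<open>Weighted sup-norm (with values in the extended reals, so that it is
  \<infinity> for functions outside H^\<infinity>_v). A weight is a function on [0,1),
  extended radially: v(z) := v(|z|).\<close>
definition wnorm :: "(real \<Rightarrow> real) \<Rightarrow> (complex \<Rightarrow> complex) \<Rightarrow> ereal" where
  "wnorm v f = (SUP z\<in>ball 0 1. ereal (norm (f z) * v (norm z)))"

definition Hinf_v :: "(real \<Rightarrow> real) \<Rightarrow> (complex \<Rightarrow> complex) set" where
  "Hinf_v v = {f. f holomorphic_on ball 0 1 \<and> wnorm v f < \<infinity>}"

definition cesaro :: "real \<Rightarrow> (complex \<Rightarrow> complex) \<Rightarrow> complex \<Rightarrow> complex" where
  "cesaro t f z = (if z = 0 then f 0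
     else (1 / z) * contour_integral (linepath 0 z) (\<lambda>\<xi>. f \<xi> / (1 - of_real t * \<xi>)))"

definition opnorm_v :: "(real \<Rightarrow> real) \<Rightarrow> ((complex \<Rightarrow> complex) \<Rightarrow> (complex \<Rightarrow> complex)) \<Rightarrow> ereal" where
  "opnorm_v v T = (SUP f\<in>{f \<in> Hinf_v v. wnorm v f \<le> 1}. wnorm v (T f))"

definition v_gamma :: "real \<Rightarrow> real \<Rightarrow> real" where
  "v_gamma \<gamma> r = (1 - r) powr \<gamma>"

end

theory Submission
  imports Defs
begin

lemma int_bound:
  fixes h :: "real \<Rightarrow> complex" and d \<phi> :: "real \<Rightarrow> real"
  assumes hI: "(h has_integral I) {0..1}"
    and hd: "\<And>s. s \<in> {0..1} \<Longrightarrow> norm (h s) \<le> d s"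
    and der: "\<And>s. s \<in> {0..1} \<Longrightarrow> (\<phi> has_real_derivative d s) (at s within {0..1})"
  shows "norm I \<le> \<phi> 1 - \<phi> 0"
proof -
  have dI: "(d has_integral (\<phi> 1 - \<phi> 0)) {0..1}"
    by (rule fundamental_theorem_of_calculus) (auto simp: has_real_derivative_iff_has_vector_derivative[symmetric] der)
  have "norm (integral {0..1} h) \<le> integral {0..1} d"
    by (rule integral_norm_bound_integral) (use hI dI hd in auto)
  then show ?thesis using hI dI by (simp add: integral_unique)
qed

lemma bern_powr:
  fixes x g :: real
  assumes "0 < x" "x \<le> 1" "1 \<le> g"
  shows "1 - x powr g \<le> g * (1 - x)"
proof -
  have "(\<lambda>y. y powr g - g * y) 1 \<le> (\<lambda>y. y powr g - g * y) x"
  proof (rule DERIV_nonpos_imp_nonincreasing[OF assms(2)])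
    fix y assume y: "x \<le> y" "y \<le> 1"
    then have yp: "0 < y" using assms by linarith
    have "((\<lambda>y. y powr g - g * y) has_real_derivative (g * y powr (g - 1) - g)) (at y)"
      using yp by (auto intro!: derivative_eq_intros)
    moreover have "y powr (g - 1) \<le> 1"
      using yp y assms by (intro powr_le1) auto
    then have "g * y powr (g - 1) - g \<le> 0" using assms
      by (metis diff_ge_0_iff_ge mult.right_neutral mult_left_mono order.trans zero_le_one diff_le_0_iff_le)
    ultimately show "\<exists>d. ((\<lambda>y. y powr g - g * y) has_real_derivative d) (at y) \<and> d \<le> 0" by blast
  qed
  then show ?thesis by (simp add: algebra_simps)
qed

lemma wnorm_fin:
  assumes "f \<in> Hinf_v (v_gamma \<gamma>)"
  shows "\<exists>M\<ge>0. wnorm (v_gamma \<gamma>) f = ereal M \<and>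
           (\<forall>z\<in>ball 0 1. norm (f z) * v_gamma \<gamma> (norm z) \<le> M)"
proof -
  have lt: "wnorm (v_gamma \<gamma>) f < \<infinity>" using assms by (simp add: Hinf_v_def)
  have ge: "ereal (norm (f z) * v_gamma \<gamma> (norm z)) \<le> wnorm (v_gamma \<gamma>) f" if "z \<in> ball 0 1" for z
    unfolding wnorm_def using that by (rule SUP_upper)
  have "ereal 0 \<le> wnorm (v_gamma \<gamma>) f"
  proof -
    have "ereal 0 \<le> ereal (norm (f 0) * v_gamma \<gamma> (norm (0::complex)))"
      by (simp add: v_gamma_def)
    also have "\<dots> \<le> wnorm (v_gamma \<gamma>) f" by (rule ge) simp
    finally show ?thesis .
  qed
  then obtain M where M: "wnorm (v_gamma \<gamma>) f = ereal M" "0 \<le> M"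
    using lt by (cases "wnorm (v_gamma \<gamma>) f") auto
  show ?thesis using M ge by auto
qed

lemma prim:
  assumes hol: "f holomorphic_on ball 0 1" and t: "0 \<le> t" "t < 1"
  obtains G where "\<And>x. x \<in> ball 0 1 \<Longrightarrow> (G has_field_derivative (f x / (1 - of_real t * x))) (at x)"
    and "\<And>z. z \<in> ball 0 1 \<Longrightarrow> ((\<lambda>\<xi>. f \<xi> / (1 - of_real t * \<xi>)) has_contour_integral (G z - G 0)) (linepath 0 z)"
proof -
  have nz: "1 - of_real t * x \<noteq> 0" if "x \<in> ball 0 1" for x :: complex
  proof
    assume "1 - of_real t * x = 0"
    then have "norm (of_real t * x) = 1" by (metis norm_one right_minus_eq)
    moreover have "norm (of_real t * x) < 1"
    proof -
      have "norm (of_real t * x) = t * norm x" using t by (simp add: norm_mult)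
      also have "\<dots> \<le> norm x" using t by (simp add: mult_left_le_one_le)
      also have "\<dots> < 1" using that by simp
      finally show ?thesis .
    qed
    ultimately show False by simp
  qed
  have gh: "(\<lambda>\<xi>. f \<xi> / (1 - of_real t * \<xi>)) holomorphic_on ball 0 1"
  proof (rule holomorphic_on_divide[OF hol])
    show "(\<lambda>\<xi>. 1 - of_real t * \<xi>) holomorphic_on ball 0 1"
      by (intro holomorphic_on_diff holomorphic_on_const holomorphic_on_mult) (simp add: holomorphic_on_ident)
  qed (use nz in blast)
  obtain G where G: "\<And>x. x \<in> ball 0 1 \<Longrightarrow> (G has_field_derivative (f x / (1 - of_real t * x))) (at x within ball 0 1)"
    using holomorphic_convex_primitive'[OF convex_ball open_ball gh] by blast
  have G': "(G has_field_derivative (f x / (1 - of_real t * x))) (at x)" if "x \<in> ball 0 1" for x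
    using G[OF that] at_within_open[OF that open_ball] by (simp only:)
  have "((\<lambda>\<xi>. f \<xi> / (1 - of_real t * \<xi>)) has_contour_integral (G z - G 0)) (linepath 0 z)" if "z \<in> ball 0 1" for z
  proof -
    have "path_image (linepath 0 z) \<subseteq> ball 0 1"
      using that unfolding path_image_linepath by (intro closed_segment_subset) auto
    from contour_integral_primitive[OF G valid_path_linepath this] show ?thesis by simp
  qed
  then show ?thesis using that G' by blast
qed

lemma mult_lt1:
  fixes a b :: real
  assumes "0 \<le> a" "a \<le> 1" "0 \<le> b" "b < 1"
  shows "a * b < 1" "b * a < 1" "a * b \<le> b" "b * a \<le> b"
proof -
  show ab: "a * b \<le> b" using assms by (intro mult_left_le_one_le) auto
  then show "a * b < 1" using assms by linarith
  show "b * a \<le> b" using ab by (simp add: mult.commute)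
  then show "b * a < 1" using assms by linarith
qed

lemma est:
  assumes hol: "f holomorphic_on ball 0 1" and t: "0 < t" "t < 1" and ga: "0 < \<gamma>"
    and M: "\<And>z. z \<in> ball 0 1 \<Longrightarrow> norm (f z) * v_gamma \<gamma> (norm z) \<le> M" and M0: "0 \<le> M"
    and z: "z \<in> ball 0 1" "z \<noteq> 0"
  shows "norm (cesaro t f z) * (1 - norm z) powr \<gamma> \<le> M * (- ln (1 - t) / t)"
    and "norm (cesaro t f z) * (1 - norm z) powr \<gamma> \<le> M * ((1 - (1 - norm z) powr \<gamma>) / (\<gamma> * norm z))"
proof -
  obtain G where G: "\<And>x. x \<in> ball 0 1 \<Longrightarrow> (G has_field_derivative (f x / (1 - of_real t * x))) (at x)"
    and GI: "\<And>z. z \<in> ball 0 1 \<Longrightarrow> ((\<lambda>\<xi>. f \<xi> / (1 - of_real t * \<xi>)) has_contour_integral (G z - G 0)) (linepath 0 z)"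
    using prim[OF hol, of t] t by auto
  define r where "r = norm z"
  have r: "0 < r" "r < 1" using z by (auto simp: r_def)
  define I where "I = G z - G 0"
  have ces: "cesaro t f z = I / z"
    using contour_integral_unique[OF GI[OF z(1)]] z(2) by (simp add: cesaro_def I_def)
  have nc: "norm (cesaro t f z) = norm I / r" by (simp add: ces norm_divide r_def)
  define h where "h = (\<lambda>s::real. f (of_real s * z) / (1 - of_real t * (of_real s * z)) * z)"
  have hI: "(h has_integral I) {0..1}"
  proof -
    have "((\<lambda>x. f (linepath 0 z x) / (1 - of_real t * linepath 0 z x) * (z - 0)) has_integral I) {0..1}"
      using GI[OF z(1)] unfolding has_contour_integral_linepath I_def .
    then show ?thesis by (simp add: h_def linepath_def scaleR_conv_of_real)
  qed
  have hb: "norm (h s) \<le> r * M / ((1 - s * r) powr \<gamma> * (1 - t * s * r))" if s: "s \<in> {0..1}" for s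
  proof -
    let ?w = "of_real s * z"
    have nw: "norm ?w = s * r" using s by (simp add: norm_mult r_def)
    have sr: "s * r \<le> r" "0 \<le> s * r" using s r by (auto simp: mult_left_le_one_le)
    have sr1: "s * r < 1" using sr r by linarith
    have w: "?w \<in> ball 0 1" unfolding mem_ball_0 nw using sr1 .
    have p: "0 < (1 - s * r) powr \<gamma>" using sr1 by simp
    have fw: "norm (f ?w) \<le> M / (1 - s * r) powr \<gamma>"
      using M[OF w] p nw by (simp add: v_gamma_def field_simps)
    have tsr: "t * s * r \<le> s * r" "0 \<le> t * s * r" using t sr
      by (auto simp: mult_left_le_one_le mult.assoc)
    have d: "1 - t * s * r \<le> norm (1 - of_real t * ?w)"
    proof -
      have "norm (of_real t * ?w) = t * s * r" using t nw by (simp add: norm_mult mult.assoc)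
      then show ?thesis using norm_triangle_ineq2[of 1 "of_real t * ?w"] by simp
    qed
    have dp: "0 < 1 - t * s * r" using tsr sr r by linarith
    have "norm (h s) = norm (f ?w) / norm (1 - of_real t * ?w) * r"
      by (simp add: h_def norm_mult norm_divide r_def)
    also have "\<dots> \<le> (M / (1 - s * r) powr \<gamma>) / (1 - t * s * r) * r"
      using r by (intro mult_right_mono frac_le fw d dp) (auto intro!: divide_nonneg_pos M0 p)
    finally show ?thesis by (simp add: field_simps)
  qed
  have r1: "0 < 1 - r" using r by simp
  have inv: "(1 - r) powr (-\<gamma>) * (1 - r) powr \<gamma> = 1"
    using r1 by (simp add: powr_minus field_simps)
  define C where "C = r * M * (1 - r) powr (-\<gamma>)"
  have dA: "norm (h s) \<le> C / (1 - t * s)" if s: "s \<in> {0..1}" for s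
  proof -
    have sr: "s * r \<le> r" "0 \<le> s * r" using s r by (auto simp: mult_left_le_one_le)
    have ts: "t * s < 1" "t * s * r \<le> t * s" using s t r mult_lt1[of s t] mult_lt1[of r "t * s"]
      by auto
    have "r * M / ((1 - s * r) powr \<gamma> * (1 - t * s * r)) \<le> r * M / ((1 - r) powr \<gamma> * (1 - t * s))"
    proof (intro divide_left_mono mult_mono powr_mono2)
      have sr1: "s * r < 1" using sr r by linarith
      have "0 < (1 - s * r) powr \<gamma>" "0 < 1 - t * s * r" "0 < (1 - r) powr \<gamma>" "0 < 1 - t * s"
        using sr1 ts r by auto
      then show "0 < (1 - s * r) powr \<gamma> * (1 - t * s * r) * ((1 - r) powr \<gamma> * (1 - t * s))"
        by (intro mult_pos_pos)
    qed (use r M0 sr ts ga in auto)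
    also have "\<dots> = C / (1 - t * s)" by (simp add: C_def powr_minus field_simps)
    finally show ?thesis using hb[OF s] by linarith
  qed
  have derA: "((\<lambda>s. - C / t * ln (1 - t * s)) has_real_derivative C / (1 - t * s)) (at s within {0..1})"
    if s: "s \<in> {0..1}" for s
  proof -
    have ts: "t * s < 1" using s t mult_lt1[of s t] by auto
    show ?thesis
      by (rule has_field_derivative_at_within) (use ts t in \<open>auto intro!: derivative_eq_intros simp: field_simps\<close>)
  qed
  have IA: "norm I \<le> - C / t * ln (1 - t)"
    using int_bound[OF hI dA derA] by simp
  show "norm (cesaro t f z) * (1 - norm z) powr \<gamma> \<le> M * (- ln (1 - t) / t)"
  proof -
    have "norm (cesaro t f z) * (1 - norm z) powr \<gamma> = norm I / r * (1 - r) powr \<gamma>"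
      by (simp add: nc r_def)
    also have "\<dots> \<le> (- C / t * ln (1 - t)) / r * (1 - r) powr \<gamma>"
      using IA r by (intro mult_right_mono divide_right_mono) auto
    also have "\<dots> = M * (- ln (1 - t) / t) * ((1 - r) powr (-\<gamma>) * (1 - r) powr \<gamma>)"
      using r t by (simp add: C_def field_simps)
    finally show ?thesis using inv by simp
  qed
  define dB where "dB = (\<lambda>s. r * M / ((1 - s * r) powr \<gamma> * (1 - s * r)))"
  have dB: "norm (h s) \<le> dB s" if s: "s \<in> {0..1}" for s
  proof -
    have sr: "s * r \<le> r" "0 \<le> s * r" using s r by (auto simp: mult_left_le_one_le)
    have ts: "t * s * r \<le> s * r" using s t r sr
      by (auto simp: mult_left_le_one_le mult.assoc)
    have sr1': "s * r \<le> 1" using sr r by linarith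
    have "r * M / ((1 - s * r) powr \<gamma> * (1 - t * s * r)) \<le> dB s" unfolding dB_def
    proof (intro divide_left_mono mult_mono)
      have sr1: "s * r < 1" using sr r by linarith
      then show "0 < (1 - s * r) powr \<gamma> * (1 - t * s * r) * ((1 - s * r) powr \<gamma> * (1 - s * r))"
        using ts by (intro mult_pos_pos) auto
    qed (use r M0 sr ts ga sr1' in auto)
    then show ?thesis using hb[OF s] by linarith
  qed
  have derB: "((\<lambda>s. M / \<gamma> / (1 - s * r) powr \<gamma>) has_real_derivative dB s) (at s within {0..1})"
    if s: "s \<in> {0..1}" for s
  proof -
    have sr: "s * r < 1" using s r mult_lt1[of s r] by auto
    have e: "(1 - s * r) powr (\<gamma> - 1) = (1 - s * r) powr \<gamma> / (1 - s * r)"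
      using sr by (simp add: powr_diff)
    have e': "(1 - r * s) powr (\<gamma> - 1) = (1 - r * s) powr \<gamma> / (1 - r * s)"
      using e by (simp add: mult.commute)
    show ?thesis
      by (rule has_field_derivative_at_within) (use sr ga in \<open>auto intro!: derivative_eq_intros simp: e' field_simps dB_def\<close>)
  qed
  have IB: "norm I \<le> M / \<gamma> / (1 - r) powr \<gamma> - M / \<gamma>"
    using int_bound[OF hI dB derB] by simp
  show "norm (cesaro t f z) * (1 - norm z) powr \<gamma> \<le> M * ((1 - (1 - norm z) powr \<gamma>) / (\<gamma> * norm z))"
  proof -
    have "norm (cesaro t f z) * (1 - norm z) powr \<gamma> = norm I / r * (1 - r) powr \<gamma>"
      by (simp add: nc r_def)
    also have "\<dots> \<le> (M / \<gamma> / (1 - r) powr \<gamma> - M / \<gamma>) / r * (1 - r) powr \<gamma>"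
      using IB r by (intro mult_right_mono divide_right_mono) auto
    also have "\<dots> = M * ((1 - (1 - r) powr \<gamma>) / (\<gamma> * r))"
      using r ga by (simp add: field_simps)
    finally show ?thesis by (simp add: r_def)
  qed
qed


lemma cesaro_hol:
  assumes hol: "f holomorphic_on ball 0 1" and t: "0 \<le> t" "t < 1"
  shows "cesaro t f holomorphic_on ball 0 1"
proof -
  obtain G where G: "\<And>x. x \<in> ball 0 1 \<Longrightarrow> (G has_field_derivative (f x / (1 - of_real t * x))) (at x)"
    and GI: "\<And>z. z \<in> ball 0 1 \<Longrightarrow> ((\<lambda>\<xi>. f \<xi> / (1 - of_real t * \<xi>)) has_contour_integral (G z - G 0)) (linepath 0 z)"
    using prim[OF hol t] by blast
  have Gh: "G holomorphic_on ball 0 1"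
    unfolding holomorphic_on_open[OF open_ball] using G by blast
  have d0: "deriv G 0 = f 0"
    using DERIV_imp_deriv[OF G[of 0]] by simp
  have P: "(\<lambda>z. if z = 0 then deriv G 0 else (G z - G 0) / (z - 0)) holomorphic_on ball 0 1"
    by (rule pole_lemma[OF Gh]) simp
  show ?thesis
  proof (rule holomorphic_transform[OF P])
    fix z :: complex assume z: "z \<in> ball 0 1"
    show "(if z = 0 then deriv G 0 else (G z - G 0) / (z - 0)) = cesaro t f z"
    proof (cases "z = 0")
      case True then show ?thesis by (simp add: d0 cesaro_def)
    next
      case False
      then show ?thesis using contour_integral_unique[OF GI[OF z]]
        by (simp add: cesaro_def)
    qed
  qed
qed

lemma ln_bound1:
  fixes t :: real assumes "0 < t" "t < 1" shows "1 \<le> - ln (1 - t) / t"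
proof -
  have "ln (1 - t) \<le> - t" using ln_le_minus_one[of "1 - t"] assms by simp
  then show ?thesis using assms by (simp add: field_simps)
qed

lemma main_bound:
  assumes f: "f \<in> Hinf_v (v_gamma \<gamma>)" and t: "0 < t" "t < 1" and ga: "0 < \<gamma>"
  defines "K \<equiv> (if 1 \<le> \<gamma> then 1 else min (- ln (1 - t) / t) (1 / \<gamma>))"
  shows "\<exists>M\<ge>0. wnorm (v_gamma \<gamma>) f = ereal M \<and> wnorm (v_gamma \<gamma>) (cesaro t f) \<le> ereal (M * K)"
proof -
  obtain M where M0: "0 \<le> M" and Mw: "wnorm (v_gamma \<gamma>) f = ereal M"
    and Mb: "\<And>z. z \<in> ball 0 1 \<Longrightarrow> norm (f z) * v_gamma \<gamma> (norm z) \<le> M"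
    using wnorm_fin[OF f] by blast
  have hol: "f holomorphic_on ball 0 1" using f by (simp add: Hinf_v_def)
  have K1: "1 \<le> K" using ln_bound1[OF t] ga by (auto simp: K_def)
  have pt: "norm (cesaro t f z) * v_gamma \<gamma> (norm z) \<le> M * K" if z: "z \<in> ball 0 1" for z
  proof (cases "z = 0")
    case True
    have "norm (cesaro t f z) * v_gamma \<gamma> (norm z) = norm (f 0) * v_gamma \<gamma> (norm (0::complex))"
      using True by (simp add: cesaro_def v_gamma_def)
    also have "\<dots> \<le> M" by (rule Mb) simp
    also have "\<dots> \<le> M * K" using K1 M0 by (simp add: mult_le_cancel_left1)
    finally show ?thesis .
  next
    case False
    define r where "r = norm z"
    have r: "0 < r" "r < 1" using z False by (auto simp: r_def)
    note A = est(1)[OF hol t ga Mb M0 z False]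
    note B = est(2)[OF hol t ga Mb M0 z False]
    have vz: "v_gamma \<gamma> (norm z) = (1 - norm z) powr \<gamma>" by (simp add: v_gamma_def)
    show ?thesis
    proof (cases "1 \<le> \<gamma>")
      case True
      have "1 - (1 - r) powr \<gamma> \<le> \<gamma> * (1 - (1 - r))" using bern_powr[of "1 - r" \<gamma>] r True by simp
      then have "(1 - (1 - r) powr \<gamma>) / (\<gamma> * r) \<le> 1" using r ga by (simp add: field_simps)
      then have "M * ((1 - (1 - r) powr \<gamma>) / (\<gamma> * r)) \<le> M * K"
        using True M0 mult_left_mono[of _ 1 M] by (simp add: K_def del: times_divide_eq_right)
      then show ?thesis using B vz by (simp add: r_def)
    next
      case False
      have "(1 - r) powr 1 \<le> (1 - r) powr \<gamma>" using False r by (intro powr_mono') auto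
      then have "1 - (1 - r) powr \<gamma> \<le> r" using r by simp
      then have "(1 - (1 - r) powr \<gamma>) / (\<gamma> * r) \<le> r / (\<gamma> * r)"
        using r ga by (intro divide_right_mono) auto
      also have "r / (\<gamma> * r) = 1 / \<gamma>" using r by simp
      finally have "(1 - (1 - r) powr \<gamma>) / (\<gamma> * r) \<le> 1 / \<gamma>" .
      then have b2: "M * ((1 - (1 - r) powr \<gamma>) / (\<gamma> * r)) \<le> M * (1 / \<gamma>)"
        using M0 by (intro mult_left_mono)
      have "norm (cesaro t f z) * v_gamma \<gamma> (norm z) \<le> min (M * (- ln (1 - t) / t)) (M * (1 / \<gamma>))"
        using A B b2 vz by (simp add: r_def)
      also have "\<dots> = M * K" using False M0 by (simp add: K_def min_mult_distrib_left)
      finally show ?thesis .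
    qed
  qed
  have "wnorm (v_gamma \<gamma>) (cesaro t f) \<le> ereal (M * K)"
    unfolding wnorm_def by (rule SUP_least) (use pt in simp)
  then show ?thesis using M0 Mw by blast
qed


theorem proposition2p9:
  fixes t \<gamma> :: real
  assumes "0 < t" "t < 1" "0 < \<gamma>"
  shows "(1 \<le> \<gamma> \<longrightarrow>
            (\<forall>f\<in>Hinf_v (v_gamma \<gamma>). cesaro t f \<in> Hinf_v (v_gamma \<gamma>)) \<and>
            opnorm_v (v_gamma \<gamma>) (cesaro t) = 1)
       \<and> (\<gamma> < 1 \<longrightarrow>
            (\<forall>f\<in>Hinf_v (v_gamma \<gamma>). cesaro t f \<in> Hinf_v (v_gamma \<gamma>)) \<and>
            opnorm_v (v_gamma \<gamma>) (cesaro t) \<le> ereal (min (- ln (1 - t) / t) (1 / \<gamma>)))"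
proof -
  define K where "K = (if 1 \<le> \<gamma> then 1 else min (- ln (1 - t) / t) (1 / \<gamma>))"
  have K1: "1 \<le> K" using ln_bound1[OF assms(1,2)] assms(3) by (auto simp: K_def)
  have mb: "\<exists>M\<ge>0. wnorm (v_gamma \<gamma>) f = ereal M \<and> wnorm (v_gamma \<gamma>) (cesaro t f) \<le> ereal (M * K)"
    if "f \<in> Hinf_v (v_gamma \<gamma>)" for f
    using main_bound[OF that assms] unfolding K_def by blast
  have mem: "\<forall>f\<in>Hinf_v (v_gamma \<gamma>). cesaro t f \<in> Hinf_v (v_gamma \<gamma>)"
  proof
    fix f assume f: "f \<in> Hinf_v (v_gamma \<gamma>)"
    have "cesaro t f holomorphic_on ball 0 1"
      using f assms by (intro cesaro_hol) (auto simp: Hinf_v_def)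
    moreover obtain M where "wnorm (v_gamma \<gamma>) (cesaro t f) \<le> ereal (M * K)" using mb[OF f] by blast
    then have "wnorm (v_gamma \<gamma>) (cesaro t f) < \<infinity>" using order.strict_trans1 by fastforce
    ultimately show "cesaro t f \<in> Hinf_v (v_gamma \<gamma>)" by (simp add: Hinf_v_def)
  qed
  have up: "opnorm_v (v_gamma \<gamma>) (cesaro t) \<le> ereal K"
    unfolding opnorm_v_def
  proof (rule SUP_least)
    fix f assume "f \<in> {f \<in> Hinf_v (v_gamma \<gamma>). wnorm (v_gamma \<gamma>) f \<le> 1}"
    then have f: "f \<in> Hinf_v (v_gamma \<gamma>)" "wnorm (v_gamma \<gamma>) f \<le> 1" by auto
    obtain M where M: "0 \<le> M" "wnorm (v_gamma \<gamma>) f = ereal M" "wnorm (v_gamma \<gamma>) (cesaro t f) \<le> ereal (M * K)"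
      using mb[OF f(1)] by blast
    have "M \<le> 1" using f(2) M(2) by simp
    then have "M * K \<le> K" using K1 by (simp add: mult_le_cancel_right1)
    then show "wnorm (v_gamma \<gamma>) (cesaro t f) \<le> ereal K" using M(3) by (meson ereal_less_eq(3) order.trans)
  qed
  have low: "1 \<le> opnorm_v (v_gamma \<gamma>) (cesaro t)"
  proof -
    define f1 where "f1 = (\<lambda>z::complex. 1::complex)"
    have w1: "wnorm (v_gamma \<gamma>) f1 \<le> 1"
      unfolding wnorm_def
    proof (rule SUP_least)
      fix z :: complex assume "z \<in> ball 0 1"
      then have "(1 - norm z) powr \<gamma> \<le> 1" using assms by (intro powr_le1) auto
      then show "ereal (norm (f1 z) * v_gamma \<gamma> (norm z)) \<le> 1" by (simp add: f1_def v_gamma_def)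
    qed
    have f1H: "f1 \<in> Hinf_v (v_gamma \<gamma>)"
      using w1 unfolding Hinf_v_def f1_def by (auto intro: order.strict_trans1)
    have "ereal 1 = ereal (norm (cesaro t f1 0) * v_gamma \<gamma> (norm (0::complex)))"
      by (simp add: cesaro_def f1_def v_gamma_def)
    also have "\<dots> \<le> wnorm (v_gamma \<gamma>) (cesaro t f1)"
      unfolding wnorm_def by (rule SUP_upper) simp
    also have "\<dots> \<le> opnorm_v (v_gamma \<gamma>) (cesaro t)"
      unfolding opnorm_v_def by (rule SUP_upper) (use f1H w1 in simp)
    finally show ?thesis by (simp add: one_ereal_def)
  qed
  show ?thesis
  proof (intro conjI impI)
    assume "1 \<le> \<gamma>"
    then have "K = 1" by (simp add: K_def)
    then show "opnorm_v (v_gamma \<gamma>) (cesaro t) = 1" using up low by (simp add: one_ereal_def order_antisym)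
  next
    assume "\<gamma> < 1"
    then have "K = min (- ln (1 - t) / t) (1 / \<gamma>)" by (simp add: K_def)
    then show "opnorm_v (v_gamma \<gamma>) (cesaro t) \<le> ereal (min (- ln (1 - t) / t) (1 / \<gamma>))" using up by simp
  qed (use mem in auto)
qed

end
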